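(* Let $f:\mathbb{R}^n\to\mathbb{R}$ be twice continuously differentiable with $L$-Lipschitz gradient, let $\varphi_s:\mathbb{R}^{n_s}\to\mathbb{R}$ ($s=1,\dots,p$) be twice continuously differentiable and $\mu_s$-strongly convex ($\mu_s>0$), $\mu=\min_s\mu_s$, let $\alpha\in(0,\frac{\mu}{L})$, and let $x^*$ be a strict saddle point of $f$. Then the Jacobian $D\psi(x^* )$ of $\psi=\psi_p\circ\cdots\circ\psi_1$ at $x^*$ has at least one eigenvalue whose modulus is strictly greater than one.
   Context: $\|\nabla f(x)-\nabla f(y)\|\le L\|x-y\|$ for all $x,y$, $L>0$. The variable is partitioned as $x=(x(1),\dots,x(p))$, $x(s)\in\mathbb{R}^{n_s}$, $\sum_sn_s=n$; $U_s\in\mathbb{R}^{n\times n_s}$ is the $s$-th block-column of $I_n$ and $\nabla_sf(x)=U_s^T\nabla f(x)$. Strong convexity: $\varphi_s(y)\ge\varphi_s(x)+\langle\nabla\varphi_s(x),y-x\rangle+\frac{\mu_s}2\|y-x\|^2$. Define $\psi_s(x)=(I_n-U_sU_s^T)x+U_s[\nabla\varphi_s]^{-1}\big(\nabla\varphi_s(x(s))-\alpha\nabla_sf(x)\big)$. A strict saddle point is $x^*$ with $\nabla f(x^* )=0$ and $\lambda_{\min}(\nabla^2f(x^* ))<0$. *)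

theory Defs
  imports "HOL-Analysis.Analysis"
begin

text \<open>Gradient of a real-valued function on a Euclidean space (via the library notion GDERIV).\<close>
definition grad :: "('a::real_inner \<Rightarrow> real) \<Rightarrow> 'a \<Rightarrow> 'a" where
  "grad g x = (THE D. GDERIV g x :> D)"

text \<open>Hessian (Jacobian matrix of the gradient).\<close>
definition hessian :: "(real^'n \<Rightarrow> real) \<Rightarrow> real^'n \<Rightarrow> real^'n^'n" where
  "hessian g x = matrix (frechet_derivative (grad g) (at x))"

text \<open>Twice continuously differentiable on the whole space.\<close>
definition C2 :: "(real^'n \<Rightarrow> real) \<Rightarrow> bool" where
  "C2 g \<longleftrightarrow> (\<forall>x. g differentiable (at x)) \<and> (\<forall>x. grad g differentiable (at x))
            \<and> continuous_on UNIV (hessian g)"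

text \<open>Blocks: coordinate i belongs to block blk i. The projection U_s U_s^T and the
  coordinate subspace image of U_s (identified with R^{n_s}).\<close>
definition blkproj :: "('n \<Rightarrow> nat) \<Rightarrow> nat \<Rightarrow> real^'n \<Rightarrow> real^'n" where
  "blkproj blk s x = (\<chi> i. if blk i = s then x $ i else 0)"

definition blksub :: "('n \<Rightarrow> nat) \<Rightarrow> nat \<Rightarrow> (real^'n) set" where
  "blksub blk s = {v. \<forall>i. blk i \<noteq> s \<longrightarrow> v $ i = 0}"

text \<open>mu-strong convexity (first-order form) of a differentiable function on a set.\<close>
definition strongly_convex_grad_on :: "'a::real_inner set \<Rightarrow> real \<Rightarrow> ('a \<Rightarrow> real) \<Rightarrow> bool" where
  "strongly_convex_grad_on S m g \<longleftrightarrow>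
     (\<forall>x\<in>S. \<forall>y\<in>S. g y \<ge> g x + inner (grad g x) (y - x) + m / 2 * (norm (y - x))\<^sup>2)"

text \<open>The block map psi_s.\<close>
definition psi_blk :: "(real^'n \<Rightarrow> real) \<Rightarrow> (nat \<Rightarrow> real^'n \<Rightarrow> real) \<Rightarrow> ('n \<Rightarrow> nat) \<Rightarrow> real
    \<Rightarrow> nat \<Rightarrow> real^'n \<Rightarrow> real^'n" where
  "psi_blk f \<phi> blk \<alpha> s x =
     x - blkproj blk s x
     + inv_into (blksub blk s) (grad (\<phi> s))
         (grad (\<phi> s) (blkproj blk s x) - \<alpha> *\<^sub>R blkproj blk s (grad f x))"

text \<open>psi_comp k = psi_k o ... o psi_1.\<close>
primrec psi_comp :: "(real^'n \<Rightarrow> real) \<Rightarrow> (nat \<Rightarrow> real^'n \<Rightarrow> real) \<Rightarrow> ('n \<Rightarrow> nat) \<Rightarrow> real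
    \<Rightarrow> nat \<Rightarrow> real^'n \<Rightarrow> real^'n" where
  "psi_comp f \<phi> blk \<alpha> 0 = id"
| "psi_comp f \<phi> blk \<alpha> (Suc k) = psi_blk f \<phi> blk \<alpha> (Suc k) \<circ> psi_comp f \<phi> blk \<alpha> k"

text \<open>Real eigenvalues of a real matrix, and complex eigenvalues of a real matrix.\<close>
definition real_eigenvalue :: "real^'n^'n \<Rightarrow> real \<Rightarrow> bool" where
  "real_eigenvalue A l \<longleftrightarrow> (\<exists>v. v \<noteq> 0 \<and> A *v v = l *\<^sub>R v)"

definition complex_eigenvalue :: "real^'n^'n \<Rightarrow> complex \<Rightarrow> bool" where
  "complex_eigenvalue A l \<longleftrightarrow>
     (\<exists>v::complex^'n. v \<noteq> 0 \<and> (\<chi> i j. complex_of_real (A $ i $ j)) *v v = l *s v)"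

definition strict_saddle :: "(real^'n \<Rightarrow> real) \<Rightarrow> real^'n \<Rightarrow> bool" where
  "strict_saddle f x \<longleftrightarrow> grad f x = 0 \<and> (\<exists>l. real_eigenvalue (hessian f x) l \<and> l < 0)"

end

theory Submission imports Defs "Jordan_Normal_Form.Spectral_Radius" begin

no_notation Matrix.vec_index (infixl "$" 100)
no_notation Matrix.scalar_prod (infix "\<bullet>" 70)

lemma poly_exp_lim:
  fixes r :: real assumes r: "r > 1"
  shows "((\<lambda>k. real k ^ m / r ^ k) \<longlongrightarrow> 0) sequentially"
proof -
  define a where "a = ln r"
  have a: "a > 0" using r by (simp add: a_def)
  have lim1: "filterlim (\<lambda>k. a * real k) at_top sequentially"
    by (rule filterlim_tendsto_pos_mult_at_top[OF tendsto_const a filterlim_real_sequentially])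
  have "((\<lambda>k. (a * real k) ^ m / exp (a * real k)) \<longlongrightarrow> 0) sequentially"
    using filterlim_compose[OF tendsto_power_div_exp_0 lim1] by (simp add: o_def)
  hence "((\<lambda>k. (1 / a ^ m) * ((a * real k) ^ m / exp (a * real k))) \<longlongrightarrow> (1 / a^m) * 0) sequentially"
    by (intro tendsto_mult tendsto_const)
  moreover have "(1 / a ^ m) * ((a * real k) ^ m / exp (a * real k)) = real k ^ m / r ^ k" for k
  proof -
    have "exp (a * real k) = exp a ^ k" by (simp add: exp_of_nat_mult[symmetric] mult.commute)
    also have "\<dots> = r ^ k" using r by (simp add: a_def)
    finally have "exp (a * real k) = r ^ k" .
    thus ?thesis using a by (simp add: power_mult_distrib)
  qed
  ultimately show ?thesis by simp
qed

lemma sum_bij_nat: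
  fixes e :: "nat \<Rightarrow> 'n::finite"
  assumes e: "bij_betw e {0..<CARD('n)} UNIV"
  shows "(\<Sum>b\<in>UNIV. g b) = (\<Sum>l<CARD('n). g (e l))"
  using sum.reindex_bij_betw[OF e, of g] by (simp add: atLeast0LessThan)

lemma pow_entries:
  fixes A :: "real^'n^'n" and e :: "nat \<Rightarrow> 'n"
  assumes e: "bij_betw e {0..<CARD('n)} UNIV"
    and M: "M = mat CARD('n) CARD('n) (\<lambda>(i,j). complex_of_real (A $ e i $ e j))"
  shows "i < CARD('n) \<Longrightarrow> complex_of_real ((((*v) A ^^ k) w) $ e i)
     = (\<Sum>j<CARD('n). (M ^\<^sub>m k) $$ (i,j) * complex_of_real (w $ e j))"
proof (induction k arbitrary: w i)
  case 0
  have "(\<Sum>j<CARD('n). (M ^\<^sub>m 0) $$ (i,j) * complex_of_real (w $ e j))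
      = (\<Sum>j<CARD('n). (if i = j then complex_of_real (w $ e j) else 0))"
    using 0 by (intro sum.cong) (auto simp: M)
  also have "\<dots> = complex_of_real (w $ e i)" using 0 by simp
  finally show ?case by simp
next
  case (Suc k)
  let ?n = "CARD('n)"
  have dimM: "dim_row (M ^\<^sub>m k) = ?n" "dim_col (M ^\<^sub>m k) = ?n"
    using pow_carrier_mat[of M ?n k] by (auto simp: M)
  have Av: "complex_of_real ((A *v w) $ e j) = (\<Sum>l<?n. M $$ (j,l) * complex_of_real (w $ e l))"
    if "j < ?n" for j
  proof -
    have "(A *v w) $ e j = (\<Sum>b\<in>UNIV. A $ e j $ b * w $ b)"
      by (simp add: matrix_vector_mult_def)
    also have "\<dots> = (\<Sum>l<?n. A $ e j $ e l * w $ e l)"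
      by (rule sum_bij_nat[OF e])
    finally show ?thesis using that by (simp add: M)
  qed
  have "complex_of_real ((((*v) A ^^ Suc k) w) $ e i) = complex_of_real ((((*v) A ^^ k) (A *v w)) $ e i)"
    by (simp add: funpow_Suc_right del: funpow.simps)
  also have "\<dots> = (\<Sum>j<?n. (M ^\<^sub>m k) $$ (i,j) * complex_of_real ((A *v w) $ e j))"
    using Suc by blast
  also have "\<dots> = (\<Sum>j<?n. (M ^\<^sub>m k) $$ (i,j) * (\<Sum>l<?n. M $$ (j,l) * complex_of_real (w $ e l)))"
    by (intro sum.cong refl) (simp add: Av)
  also have "\<dots> = (\<Sum>l<?n. (\<Sum>j<?n. (M ^\<^sub>m k) $$ (i,j) * M $$ (j,l)) * complex_of_real (w $ e l))"
    unfolding sum_distrib_left sum_distrib_right mult.assoc by (rule sum.swap)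
  also have "\<dots> = (\<Sum>l<?n. (M ^\<^sub>m Suc k) $$ (i,l) * complex_of_real (w $ e l))"
  proof (intro sum.cong refl)
    fix l assume l: "l \<in> {..<?n}"
    have "(M ^\<^sub>m Suc k) $$ (i,l) = scalar_prod (row (M ^\<^sub>m k) i) (col M l)"
      using Suc.prems l dimM by (simp add: M)
    also have "\<dots> = (\<Sum>j<?n. (M ^\<^sub>m k) $$ (i,j) * M $$ (j,l))"
      using Suc.prems l dimM by (simp add: scalar_prod_def M atLeast0LessThan)
    finally show "(\<Sum>j<?n. (M ^\<^sub>m k) $$ (i,j) * M $$ (j,l)) * complex_of_real (w $ e l)
        = (M ^\<^sub>m Suc k) $$ (i,l) * complex_of_real (w $ e l)" by simp
  qed
  finally show ?case .
qed

lemma exp_growth_eigenvalue: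
  fixes A :: "real^'n^'n" and v :: "real^'n"
  assumes r: "r > 1" and c: "c > 0"
    and grow: "\<And>k. c * r ^ k \<le> norm (((*v) A ^^ k) v)"
  shows "\<exists>l. complex_eigenvalue A l \<and> cmod l > 1"
proof -
  let ?n = "CARD('n)"
  obtain e where e: "bij_betw e {0..<?n} (UNIV::'n set)"
    using ex_bij_betw_nat_finite[of "UNIV::'n set"] by auto
  define M where "M = mat ?n ?n (\<lambda>(i,j). complex_of_real (A $ e i $ e j))"
  have Mc: "M \<in> carrier_mat ?n ?n" by (simp add: M_def)
  have n0: "?n > 0" by simp
  note pe = pow_entries[OF e M_def]
  show ?thesis
  proof (cases "spectral_radius M > 1")
    case True
    from spectral_radius_mem_max(1)[OF Mc n0] obtain ev where ev: "ev \<in> spectrum M"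
      and nev: "norm ev = spectral_radius M" by auto
    from ev obtain u where u: "eigenvector M u ev"
      unfolding spectrum_def eigenvalue_def by auto
    have uc: "u \<in> carrier_vec ?n" and u0: "u \<noteq> 0\<^sub>v ?n" and Mu: "M *\<^sub>v u = ev \<cdot>\<^sub>v u"
      using u Mc unfolding eigenvector_def by auto
    define ei where "ei = inv_into {0..<?n} e"
    have ei1: "ei (e i) = i" if "i < ?n" for i
      using e that unfolding ei_def bij_betw_def by (simp add: inv_into_f_f)
    have ei2: "e (ei a) = a" "ei a < ?n" for a
      using e unfolding ei_def bij_betw_def
      by (auto simp: f_inv_into_f) (metis UNIV_I atLeastLessThan_iff inv_into_into)
    define w :: "complex^'n" where "w = (\<chi> a. Matrix.vec_index u (ei a))"
    have w0: "w \<noteq> 0"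
    proof
      assume "w = 0"
      hence "Matrix.vec_index u i = 0" if "i < ?n" for i
      proof -
        have "w $ e i = Matrix.vec_index u i" by (simp add: w_def ei1 that)
        thus ?thesis using \<open>w = 0\<close> by simp
      qed
      hence "u = 0\<^sub>v ?n" using uc by (intro eq_vecI) auto
      with u0 show False by simp
    qed
    have "(\<chi> i j. complex_of_real (A $ i $ j)) *v w = ev *s w"
    proof (rule Finite_Cartesian_Product.vec_eq_iff[THEN iffD2], intro allI)
      fix a
      have "((\<chi> i j. complex_of_real (A $ i $ j)) *v w) $ a
          = (\<Sum>b\<in>UNIV. complex_of_real (A $ a $ b) * w $ b)"
        by (simp add: matrix_vector_mult_def)
      also have "\<dots> = (\<Sum>l<?n. complex_of_real (A $ a $ e l) * w $ e l)"
        by (rule sum_bij_nat[OF e])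
      also have "\<dots> = (\<Sum>l<?n. M $$ (ei a, l) * Matrix.vec_index u l)"
        by (intro sum.cong refl) (simp add: M_def w_def ei1 ei2)
      also have "\<dots> = Matrix.vec_index (M *\<^sub>v u) (ei a)"
        using ei2 uc Mc by (simp add: scalar_prod_def atLeast0LessThan)
      also have "\<dots> = ev * w $ a"
        using Mu ei2 uc by (simp add: w_def)
      finally show "((\<chi> i j. complex_of_real (A $ i $ j)) *v w) $ a = (ev *s w) $ a" by simp
    qed
    hence "complex_eigenvalue A ev" unfolding complex_eigenvalue_def using w0 by blast
    thus ?thesis using True nev by auto
  next
    case False
    hence "spectral_radius M \<le> 1" by simp
    from spectral_radius_jnf_norm_bound_le_1_upper_triangular[OF Mc this]
    obtain c1 c2 where nb: "\<And>k. norm_bound (M ^\<^sub>m k) (c1 + c2 * real k ^ (?n - 1))" by auto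
    define V where "V = (\<Sum>j<?n. \<bar>v $ e j\<bar>)"
    have V0: "V \<ge> 0" by (simp add: V_def)
    have bound: "norm (((*v) A ^^ k) v) \<le> real ?n * (V * (c1 + c2 * real k ^ (?n - 1)))" for k
    proof -
      let ?B = "c1 + c2 * real k ^ (?n - 1)"
      have dimM: "dim_row (M ^\<^sub>m k) = ?n" "dim_col (M ^\<^sub>m k) = ?n"
        using pow_carrier_mat[OF Mc, of k] by auto
      have comp: "\<bar>(((*v) A ^^ k) v) $ e i\<bar> \<le> V * ?B" if i: "i < ?n" for i
      proof -
        have "\<bar>(((*v) A ^^ k) v) $ e i\<bar> = cmod (complex_of_real ((((*v) A ^^ k) v) $ e i))"
          by simp
        also have "\<dots> = cmod (\<Sum>j<?n. (M ^\<^sub>m k) $$ (i,j) * complex_of_real (v $ e j))"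
          using pe[OF i] by simp
        also have "\<dots> \<le> (\<Sum>j<?n. cmod ((M ^\<^sub>m k) $$ (i,j)) * \<bar>v $ e j\<bar>)"
          by (rule order_trans[OF norm_sum]) (simp add: norm_mult)
        also have "\<dots> \<le> (\<Sum>j<?n. ?B * \<bar>v $ e j\<bar>)"
        proof (intro sum_mono mult_right_mono)
          fix j assume "j \<in> {..<?n}"
          thus "cmod ((M ^\<^sub>m k) $$ (i,j)) \<le> ?B"
            using nb[of k] i dimM unfolding norm_bound_def by auto
        qed simp
        also have "\<dots> = V * ?B" by (simp add: V_def sum_distrib_right mult.commute)
        finally show ?thesis .
      qed
      have "norm (((*v) A ^^ k) v) \<le> (\<Sum>a\<in>UNIV. \<bar>(((*v) A ^^ k) v) $ a\<bar>)"
        by (rule norm_le_l1_cart)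
      also have "\<dots> = (\<Sum>i<?n. \<bar>(((*v) A ^^ k) v) $ e i\<bar>)"
        by (rule sum_bij_nat[OF e])
      also have "\<dots> \<le> (\<Sum>i<?n. V * ?B)"
        by (intro sum_mono comp) auto
      finally show ?thesis by simp
    qed
    have lim: "((\<lambda>k. real ?n * V * (c1 * (1 / r ^ k) + c2 * (real k ^ (?n - 1) / r ^ k))) \<longlongrightarrow>
               real ?n * V * (c1 * 0 + c2 * 0)) sequentially"
    proof -
      have "(\<lambda>k. 1 / r ^ k) \<longlonglongrightarrow> 0" using poly_exp_lim[OF r, of 0] by simp
      thus ?thesis by (intro tendsto_intros poly_exp_lim r)
    qed
    hence "\<forall>\<^sub>F k in sequentially. real ?n * V * (c1 * (1 / r ^ k) + c2 * (real k ^ (?n - 1) / r ^ k)) < c"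
      using c by (simp add: order_tendsto_iff)
    then obtain k where k: "real ?n * V * (c1 * (1 / r ^ k) + c2 * (real k ^ (?n - 1) / r ^ k)) < c"
      by (meson eventually_sequentially le_refl)
    have rk: "r ^ k > 0" using r by simp
    have "real ?n * V * (c1 * (1 / r ^ k) + c2 * (real k ^ (?n - 1) / r ^ k))
        = real ?n * (V * (c1 + c2 * real k ^ (?n - 1))) / r ^ k"
      using rk by (simp add: field_simps add_divide_distrib)
    with k have "real ?n * (V * (c1 + c2 * real k ^ (?n - 1))) < c * r ^ k"
      using rk by (simp add: divide_less_eq)
    with bound[of k] grow[of k] show ?thesis by simp
  qed
qed



lemma blkproj_nth[simp]: "blkproj blk s x $ i = (if blk i = s then x $ i else 0)"
  by (simp add: blkproj_def)

lemma linear_blkproj: "linear (blkproj blk s)"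
  by (rule linearI) (auto simp: Finite_Cartesian_Product.vec_eq_iff)

lemma bounded_linear_blkproj: "bounded_linear (blkproj blk s)"
  using linear_blkproj linear_conv_bounded_linear by blast

lemma norm_blkproj_le: "norm (blkproj blk s x) \<le> norm x"
  by (rule norm_le_componentwise_cart) auto

lemma blkproj_in_blksub: "blkproj blk s x \<in> blksub blk s"
  by (simp add: blksub_def)

lemma blksub_proj: "d \<in> blksub blk s \<Longrightarrow> blkproj blk s d = d"
  by (auto simp: blksub_def Finite_Cartesian_Product.vec_eq_iff)

lemma blkproj_idem[simp]: "blkproj blk s (blkproj blk s x) = blkproj blk s x"
  by (auto simp: Finite_Cartesian_Product.vec_eq_iff)

lemma inner_blkproj: "inner (blkproj blk s x) y = inner x (blkproj blk s y)"
  by (simp add: inner_vec_def) (auto intro: sum.cong)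

lemma inner_blksub_proj: "d \<in> blksub blk s \<Longrightarrow> inner d (blkproj blk s w) = inner d w"
  by (metis blksub_proj inner_blkproj)

lemma sum_blkproj:
  assumes "\<And>i. blk i \<in> {1..p}"
  shows "(\<Sum>s\<in>{1..p}. blkproj blk s x) = x"
proof (rule Finite_Cartesian_Product.vec_eq_iff[THEN iffD2], intro allI)
  fix i
  have "(\<Sum>s\<in>{1..p}. blkproj blk s x) $ i = (\<Sum>s\<in>{1..p}. (if blk i = s then x $ i else 0))"
    by (simp add: sum_component)
  also have "\<dots> = x $ i" using assms[of i] by (simp add: sum.delta)
  finally show "(\<Sum>s\<in>{1..p}. blkproj blk s x) $ i = x $ i" .
qed

lemma subspace_blksub: "Real_Vector_Spaces.subspace (blksub blk s)"
  by (auto simp: Real_Vector_Spaces.subspace_def blksub_def)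

lemma quad_bound:
  fixes H :: "real^'n \<Rightarrow> real^'n"
  assumes lin: "linear H" and sym: "\<And>x y. inner x (H y) = inner (H x) y"
    and bnd: "\<And>x. norm (H x) \<le> L * norm x"
  shows "\<exists>K>0. \<forall>h. - inner h (H h) \<le> K * (norm (H h))\<^sup>2"
proof -
  let ?S = "range H"
  have sub: "Real_Vector_Spaces.subspace ?S" using linear_subspace_image[OF lin subspace_UNIV] by simp
  have cl: "closed ?S" by (rule closed_subspace[OF sub])
  have bl: "bounded_linear H" using lin linear_conv_bounded_linear by blast
  have inj: "\<forall>x\<in>?S. H x = 0 \<longrightarrow> x = 0"
  proof (intro ballI impI)
    fix x assume "x \<in> ?S" "H x = 0"
    then obtain z where z: "x = H z" by auto
    have "inner x x = inner z (H x)" using sym[of z x] z by (simp add: inner_commute)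
    thus "x = 0" using \<open>H x = 0\<close> by simp
  qed
  obtain e where e: "e > 0" "\<And>x. x \<in> ?S \<Longrightarrow> norm (H x) \<ge> e * norm x"
    using injective_imp_isometric[OF cl sub bl inj] by blast
  have L0: "L \<ge> 0"
  proof -
    have "norm (H (axis undefined 1)) \<le> L * norm (axis undefined (1::real) :: real^'n)" by (rule bnd)
    thus ?thesis by (metis mult_le_0_iff norm_axis_1 norm_ge_zero order_trans linorder_not_le zero_less_one mult.right_neutral)
  qed
  define K where "K = L / e^2 + 1"
  have "L / e^2 \<ge> 0" using L0 e by simp
  hence K: "K > 0" by (simp add: K_def)
  have "- inner h (H h) \<le> K * (norm (H h))\<^sup>2" for h
  proof -
    obtain y z where y: "y \<in> span ?S" and z: "\<And>w. w \<in> span ?S \<Longrightarrow> Linear_Algebra.orthogonal z w" and hyz: "h = y + z"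
      using orthogonal_subspace_decomp_exists by blast
    have yS: "y \<in> ?S" using y sub by (metis span_eq_iff)
    have "Linear_Algebra.orthogonal z (H (H z))" using z by (simp add: span_base)
    hence "inner (H z) (H z) = 0" using sym[of z "H z"] by (simp add: Linear_Algebra.orthogonal_def)
    hence Hz: "H z = 0" by simp
    have Hh: "H h = H y" using hyz Hz linear_add[OF lin] by simp
    have "Linear_Algebra.orthogonal z (H y)" using z by (simp add: span_base)
    hence zy: "inner z (H y) = 0" by (simp add: Linear_Algebra.orthogonal_def)
    have qh: "inner h (H h) = inner y (H y)" using Hh hyz zy by (simp add: inner_add_left)
    have "- inner y (H y) \<le> norm y * norm (H y)"
      using Cauchy_Schwarz_ineq2[of y "H y"] by linarith
    also have "\<dots> \<le> norm y * (L * norm y)" by (intro mult_left_mono bnd) auto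
    also have "\<dots> = L * (norm y)\<^sup>2" by (simp add: power2_eq_square)
    also have "\<dots> \<le> L * ((norm (H y))\<^sup>2 / e^2)"
    proof (intro mult_left_mono L0)
      have "e * norm y \<le> norm (H y)" using e(2)[OF yS] .
      hence "(e * norm y)\<^sup>2 \<le> (norm (H y))\<^sup>2" using e by (intro power_mono) auto
      thus "(norm y)\<^sup>2 \<le> (norm (H y))\<^sup>2 / e^2" using e by (simp add: field_simps power_mult_distrib)
    qed
    also have "\<dots> \<le> K * (norm (H y))\<^sup>2" unfolding K_def by (simp add: field_simps)
    finally show ?thesis using qh Hh by simp
  qed
  thus ?thesis using K by blast
qed

primrec dcomp :: "(nat \<Rightarrow> 'a \<Rightarrow> 'a) \<Rightarrow> nat \<Rightarrow> 'a \<Rightarrow> 'a" where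
  "dcomp D 0 = id"
| "dcomp D (Suc k) = D (Suc k) \<circ> dcomp D k"

lemma step_decrease:
  fixes H :: "real^'n \<Rightarrow> real^'n"
  assumes lin: "linear H" and sym: "\<And>x y. inner x (H y) = inner (H x) y"
    and bnd: "\<And>x. norm (H x) \<le> L * norm x"
    and a: "\<alpha> > 0" and aL: "\<alpha> * L \<le> \<mu>"
    and dd: "\<mu> * (norm d)\<^sup>2 \<le> \<alpha> * inner d (H h)"
  shows "inner (h - d) (H (h - d)) \<le> inner h (H h) - (\<mu> / \<alpha>) * (norm d)\<^sup>2"
proof -
  have e1: "inner (h - d) (H (h - d)) = inner h (H h) - 2 * inner d (H h) + inner d (H d)"
    using sym[of h d] linear_diff[OF lin, of h d]
    by (simp add: inner_diff_left inner_diff_right inner_commute[of "H h" d])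
  have "inner d (H d) \<le> norm d * norm (H d)" using Cauchy_Schwarz_ineq2[of d "H d"] by linarith
  also have "\<dots> \<le> norm d * (L * norm d)" by (intro mult_left_mono bnd) auto
  finally have e2: "inner d (H d) \<le> L * (norm d)\<^sup>2" by (simp add: power2_eq_square mult_ac)
  have e3: "(\<mu> / \<alpha>) * (norm d)\<^sup>2 \<le> inner d (H h)" using dd a by (simp add: field_simps)
  have e4: "L * (norm d)\<^sup>2 \<le> (\<mu> / \<alpha>) * (norm d)\<^sup>2"
    using aL a by (intro mult_right_mono) (auto simp: field_simps)
  show ?thesis using e1 e2 e3 e4 by linarith
qed

lemma sq_sum_le: "(a + b)\<^sup>2 \<le> 2 * a\<^sup>2 + 2 * (b::real)\<^sup>2"
proof -
  have "0 \<le> (a - b)\<^sup>2" by simp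
  thus ?thesis by (simp add: power2_eq_square algebra_simps)
qed

lemma sweep:
  fixes H :: "real^'n \<Rightarrow> real^'n" and D :: "nat \<Rightarrow> real^'n \<Rightarrow> real^'n"
  assumes lin: "linear H" and sym: "\<And>x y. inner x (H y) = inner (H x) y"
    and bnd: "\<And>x. norm (H x) \<le> L * norm x"
    and a: "\<alpha> > 0" and mu: "\<mu> > 0" and aL: "\<alpha> * L \<le> \<mu>" and K: "K \<ge> 0"
    and blk_range: "\<And>i. blk i \<in> {1..p}"
    and step: "\<And>s h. s \<in> {1..p} \<Longrightarrow> \<exists>d. D s h = h - d \<and> \<mu> * (norm d)\<^sup>2 \<le> \<alpha> * inner d (H h)
                   \<and> norm (blkproj blk s (H h)) \<le> K * norm d"
  shows "\<exists>\<delta>>0. \<forall>h. inner h (H h) \<le> 0 \<longrightarrow>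
            (1 + \<delta>) * (- inner h (H h)) \<le> - inner (dcomp D p h) (H (dcomp D p h))"
proof -
  define c0 where "c0 = \<mu> / \<alpha>"
  have c0: "c0 > 0" using a mu by (simp add: c0_def)
  have L0: "L \<ge> 0"
  proof -
    have "norm (H (axis undefined 1)) \<le> L * norm (axis undefined (1::real) :: real^'n)" by (rule bnd)
    thus ?thesis by (metis norm_axis_1 norm_ge_zero order_trans mult.right_neutral)
  qed
  have inv: "k \<le> p \<Longrightarrow> \<exists>M N. M \<ge> 0 \<and> N \<ge> 0 \<and> (\<forall>h. \<exists>E\<ge>0.
      inner (dcomp D k h) (H (dcomp D k h)) \<le> inner h (H h) - c0 * E
      \<and> (norm (h - dcomp D k h))\<^sup>2 \<le> M * E
      \<and> (\<forall>s\<in>{1..k}. (norm (blkproj blk s (H h)))\<^sup>2 \<le> N * E))" for k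
  proof (induction k)
    case 0
    show ?case by (rule exI[of _ 0], rule exI[of _ 0]) (auto intro!: exI[of _ 0])
  next
    case (Suc k)
    then obtain M N where M: "M \<ge> 0" and N: "N \<ge> 0" and IH: "\<And>h. \<exists>E\<ge>0.
      inner (dcomp D k h) (H (dcomp D k h)) \<le> inner h (H h) - c0 * E
      \<and> (norm (h - dcomp D k h))\<^sup>2 \<le> M * E
      \<and> (\<forall>s\<in>{1..k}. (norm (blkproj blk s (H h)))\<^sup>2 \<le> N * E)" by auto
    have sk: "Suc k \<in> {1..p}" using Suc.prems by auto
    define M' where "M' = 2 * M + 2"
    define N' where "N' = max N (2 * K^2 + 2 * L^2 * M)"
    have "\<exists>E\<ge>0.
      inner (dcomp D (Suc k) h) (H (dcomp D (Suc k) h)) \<le> inner h (H h) - c0 * E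
      \<and> (norm (h - dcomp D (Suc k) h))\<^sup>2 \<le> M' * E
      \<and> (\<forall>s\<in>{1..Suc k}. (norm (blkproj blk s (H h)))\<^sup>2 \<le> N' * E)" for h
    proof -
      obtain E where E: "E \<ge> 0" and q1: "inner (dcomp D k h) (H (dcomp D k h)) \<le> inner h (H h) - c0 * E"
        and m1: "(norm (h - dcomp D k h))\<^sup>2 \<le> M * E"
        and n1: "\<And>s. s\<in>{1..k} \<Longrightarrow> (norm (blkproj blk s (H h)))\<^sup>2 \<le> N * E"
        using IH[of h] by auto
      define h' where "h' = dcomp D k h"
      obtain d where d1: "D (Suc k) h' = h' - d" and d2: "\<mu> * (norm d)\<^sup>2 \<le> \<alpha> * inner d (H h')"
        and d3: "norm (blkproj blk (Suc k) (H h')) \<le> K * norm d"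
        using step[OF sk] by blast
      have hs: "dcomp D (Suc k) h = h' - d" using d1 by (simp add: h'_def)
      define E' where "E' = E + (norm d)\<^sup>2"
      have E': "E' \<ge> 0" "E \<le> E'" "(norm d)\<^sup>2 \<le> E'" using E by (auto simp: E'_def)
      have qa: "inner (h' - d) (H (h' - d)) \<le> inner h' (H h') - c0 * (norm d)\<^sup>2"
        unfolding c0_def by (rule step_decrease[OF lin sym bnd a aL d2])
      have A: "inner (dcomp D (Suc k) h) (H (dcomp D (Suc k) h)) \<le> inner h (H h) - c0 * E'"
        using qa q1 unfolding hs E'_def h'_def by (simp add: algebra_simps)
      have "norm (h - (h' - d)) \<le> norm (h - h') + norm d"
      proof -
        have "h - (h' - d) = (h - h') + d" by simp
        thus ?thesis by (metis norm_triangle_ineq)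
      qed
      hence "(norm (h - (h' - d)))\<^sup>2 \<le> (norm (h - h') + norm d)\<^sup>2"
        by (intro power_mono) auto
      also have "\<dots> \<le> 2 * (norm (h - h'))\<^sup>2 + 2 * (norm d)\<^sup>2" by (rule sq_sum_le)
      also have "\<dots> \<le> 2 * (M * E) + 2 * E'" using m1 E' unfolding h'_def by linarith
      also have "\<dots> \<le> M' * E'" using M E' mult_left_mono[OF E'(2) M] by (simp add: M'_def algebra_simps)
      finally have B: "(norm (h - dcomp D (Suc k) h))\<^sup>2 \<le> M' * E'" using hs by simp
      have C: "(norm (blkproj blk s (H h)))\<^sup>2 \<le> N' * E'" if s: "s \<in> {1..Suc k}" for s
      proof (cases "s = Suc k")
        case False
        hence "s \<in> {1..k}" using s by auto
        hence "(norm (blkproj blk s (H h)))\<^sup>2 \<le> N * E" by (rule n1)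
        also have "\<dots> \<le> N' * E'" using E' E N by (intro mult_mono) (auto simp: N'_def)
        finally show ?thesis .
      next
        case True
        have "H h = H h' + H (h - h')" using linear_diff[OF lin, of h h'] by simp
        hence "blkproj blk s (H h) = blkproj blk s (H h') + blkproj blk s (H (h - h'))"
          using linear_add[OF linear_blkproj] by metis
        hence "norm (blkproj blk s (H h)) \<le> norm (blkproj blk s (H h')) + norm (blkproj blk s (H (h - h')))"
          by (metis norm_triangle_ineq)
        also have "\<dots> \<le> K * norm d + L * norm (h - h')"
        proof -
          have "norm (blkproj blk s (H h')) \<le> K * norm d" using d3 True by simp
          thus ?thesis using norm_blkproj_le[of blk s "H (h - h')"] bnd[of "h - h'"] by linarith
        qed
        finally have "(norm (blkproj blk s (H h)))\<^sup>2 \<le> (K * norm d + L * norm (h - h'))\<^sup>2"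
          by (intro power_mono) auto
        also have "\<dots> \<le> 2 * (K * norm d)\<^sup>2 + 2 * (L * norm (h - h'))\<^sup>2" by (rule sq_sum_le)
        also have "\<dots> = 2 * K^2 * (norm d)\<^sup>2 + 2 * L^2 * (norm (h - h'))\<^sup>2"
          by (simp add: power_mult_distrib)
        also have "\<dots> \<le> 2 * K^2 * E' + 2 * L^2 * (M * E')"
        proof (intro add_mono mult_left_mono)
          show "(norm (h - h'))\<^sup>2 \<le> M * E'" using m1 M E' unfolding h'_def
            by (meson mult_left_mono order_trans)
        qed (use E' in auto)
        also have "\<dots> = (2 * K^2 + 2 * L^2 * M) * E'" by (simp add: algebra_simps)
        also have "\<dots> \<le> N' * E'" using E' by (intro mult_right_mono) (auto simp: N'_def)
        finally show ?thesis .
      qed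
      show ?thesis using A B C E' by blast
    qed
    moreover have "M' \<ge> 0" "N' \<ge> 0" using M N by (auto simp: M'_def N'_def)
    ultimately show ?case by blast
  qed
  obtain M N where N: "N \<ge> 0" and IP: "\<And>h. \<exists>E\<ge>0.
      inner (dcomp D p h) (H (dcomp D p h)) \<le> inner h (H h) - c0 * E
      \<and> (\<forall>s\<in>{1..p}. (norm (blkproj blk s (H h)))\<^sup>2 \<le> N * E)"
    using inv[of p] by blast
  obtain K4 where K4: "K4 > 0" "\<And>h. - inner h (H h) \<le> K4 * (norm (H h))\<^sup>2"
    using quad_bound[OF lin sym bnd] by blast
  define N1 where "N1 = N + 1"
  have N1: "N1 > 0" using N by (simp add: N1_def)
  define \<delta> where "\<delta> = c0 / (K4 * (real p)^2 * N1)"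
  have p: "p \<ge> 1" using blk_range[of undefined] by auto
  have \<delta>: "\<delta> > 0" using c0 K4 N1 p by (simp add: \<delta>_def)
  have "(1 + \<delta>) * (- inner h (H h)) \<le> - inner (dcomp D p h) (H (dcomp D p h))"
    if hq: "inner h (H h) \<le> 0" for h
  proof -
    obtain E where E: "E \<ge> 0" and q: "inner (dcomp D p h) (H (dcomp D p h)) \<le> inner h (H h) - c0 * E"
      and bl: "\<And>s. s \<in> {1..p} \<Longrightarrow> (norm (blkproj blk s (H h)))\<^sup>2 \<le> N * E"
      using IP[of h] by blast
    have bl': "norm (blkproj blk s (H h)) \<le> sqrt (N1 * E)" if "s \<in> {1..p}" for s
    proof -
      have "(norm (blkproj blk s (H h)))\<^sup>2 \<le> N1 * E" using bl[OF that] E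
        by (simp add: N1_def algebra_simps)
      thus ?thesis by (simp add: real_le_rsqrt)
    qed
    have "norm (H h) = norm (\<Sum>s\<in>{1..p}. blkproj blk s (H h))"
    proof -
      have "(\<Sum>s\<in>{1..p}. blkproj blk s (H h)) = H h" by (rule sum_blkproj) (rule blk_range)
      thus ?thesis by simp
    qed
    also have "\<dots> \<le> (\<Sum>s\<in>{1..p}. norm (blkproj blk s (H h)))" by (rule norm_sum)
    also have "\<dots> \<le> (\<Sum>s\<in>{1..p}. sqrt (N1 * E))" by (intro sum_mono bl')
    also have "\<dots> = real p * sqrt (N1 * E)" by simp
    finally have "(norm (H h))\<^sup>2 \<le> (real p * sqrt (N1 * E))\<^sup>2" by (intro power_mono) auto
    also have "\<dots> = (real p)^2 * (N1 * E)" using N1 E by (simp add: power_mult_distrib)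
    finally have nh: "(norm (H h))\<^sup>2 \<le> (real p)^2 * N1 * E" by simp
    have "- inner h (H h) \<le> K4 * ((real p)^2 * N1 * E)"
      using K4(2)[of h] nh K4(1) by (meson mult_left_mono less_imp_le order_trans)
    hence "\<delta> * (- inner h (H h)) \<le> \<delta> * (K4 * ((real p)^2 * N1 * E))"
      using \<delta> by (intro mult_left_mono) auto
    also have "\<dots> = c0 * E" using K4 N1 p by (simp add: \<delta>_def)
    finally show ?thesis using q by (simp add: algebra_simps)
  qed
  thus ?thesis using \<delta> by blast
qed



lemma linear_functional_inner:
  fixes g :: "'a::euclidean_space \<Rightarrow> real"
  assumes "linear g"
  shows "g h = inner h (\<Sum>b\<in>Basis. g b *\<^sub>R b)"
proof -
  have "g h = g (\<Sum>b\<in>Basis. (inner h b) *\<^sub>R b)" by (simp add: euclidean_representation)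
  also have "\<dots> = (\<Sum>b\<in>Basis. (inner h b) * g b)"
    using assms by (simp add: linear_sum[OF assms] linear_scale[OF assms])
  also have "\<dots> = inner h (\<Sum>b\<in>Basis. g b *\<^sub>R b)"
    by (simp add: inner_sum_right mult.commute)
  finally show ?thesis .
qed

lemma gderiv_unique:
  assumes "GDERIV g x :> D1" "GDERIV g x :> D2" shows "D1 = D2"
proof -
  have "(\<lambda>h. inner h D1) = (\<lambda>h. inner h D2)"
    using assms unfolding gderiv_def by (rule has_derivative_unique)
  hence "inner (D1 - D2) D1 = inner (D1 - D2) D2" by metis
  hence "inner (D1 - D2) (D1 - D2) = 0" by (simp add: inner_diff_right)
  thus ?thesis by simp
qed

lemma grad_works:
  fixes g :: "'a::euclidean_space \<Rightarrow> real"
  assumes "g differentiable (at x)"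
  shows "(g has_derivative (\<lambda>h. inner h (grad g x))) (at x)"
proof -
  obtain g' where g': "(g has_derivative g') (at x)" using assms differentiable_def by blast
  have lin: "linear g'" using g' has_derivative_linear by blast
  define D where "D = (\<Sum>b\<in>Basis. g' b *\<^sub>R b)"
  have "g' = (\<lambda>h. inner h D)" unfolding D_def by (intro ext linear_functional_inner[OF lin])
  hence ex: "GDERIV g x :> D" using g' by (simp add: gderiv_def)
  have "grad g x = D" unfolding grad_def
    by (rule the_equality[where P="\<lambda>D. GDERIV g x :> D", OF ex]) (rule gderiv_unique[OF _ ex])
  thus ?thesis using ex by (simp add: gderiv_def)
qed

lemma grad_eqI:
  assumes "(g has_derivative (\<lambda>h. inner h D)) (at x)"
  shows "grad g x = D"
proof -
  have ex: "GDERIV g x :> D" using assms by (simp add: gderiv_def)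
  show ?thesis unfolding grad_def
    by (rule the_equality[where P="\<lambda>D. GDERIV g x :> D", OF ex]) (rule gderiv_unique[OF _ ex])
qed



lemma deriv_dir:
  fixes F :: "'a::real_normed_vector \<Rightarrow> 'b::real_normed_vector"
  assumes FG: "(F has_derivative G) (at x0)" and e: "e > 0"
  shows "\<exists>t>0. norm (F (x0 + t *\<^sub>R d) - F x0 - t *\<^sub>R G d) \<le> e * t * norm d"
proof (cases "d = 0")
  case True
  have "G 0 = 0" using FG has_derivative_linear linear_0 by blast
  thus ?thesis using True by (intro exI[of _ 1]) auto
next
  case False
  have lin: "linear G" using FG has_derivative_linear by blast
  obtain \<delta> where \<delta>: "\<delta> > 0" and H: "\<And>y. norm (y - x0) < \<delta> \<Longrightarrow> norm (F y - F x0 - G (y - x0)) \<le> e * norm (y - x0)"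
    using FG e unfolding has_derivative_at_alt by blast
  define t where "t = \<delta> / (2 * norm d)"
  have t: "t > 0" using \<delta> False by (simp add: t_def)
  have nt: "norm ((x0 + t *\<^sub>R d) - x0) = t * norm d" using t by simp
  also have "\<dots> < \<delta>" using \<delta> False by (simp add: t_def)
  finally have "norm (F (x0 + t *\<^sub>R d) - F x0 - G ((x0 + t *\<^sub>R d) - x0)) \<le> e * norm ((x0 + t *\<^sub>R d) - x0)"
    by (rule H)
  hence "norm (F (x0 + t *\<^sub>R d) - F x0 - t *\<^sub>R G d) \<le> e * (t * norm d)"
    using nt t by (simp add: linear_scale[OF lin])
  thus ?thesis using t by (intro exI[of _ t]) (auto simp: mult_ac)
qed

lemma deriv_lower:
  fixes F :: "'a::real_inner \<Rightarrow> 'a"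
  assumes FG: "(F has_derivative G) (at x0)"
    and low: "\<And>t. t > 0 \<Longrightarrow> m * t * (norm d)\<^sup>2 \<le> inner (F (x0 + t *\<^sub>R d) - F x0) d"
  shows "m * (norm d)\<^sup>2 \<le> inner (G d) d"
proof (rule field_le_epsilon)
  fix e :: real assume e: "e > 0"
  define e' where "e' = e / ((norm d)\<^sup>2 + 1)"
  have nd1: "(norm d)\<^sup>2 + 1 > 0" using zero_le_power2[of "norm d"] by linarith
  hence e': "e' > 0" using e by (simp add: e'_def)
  obtain t where t: "t > 0" and tt: "norm (F (x0 + t *\<^sub>R d) - F x0 - t *\<^sub>R G d) \<le> e' * t * norm d"
    using deriv_dir[OF FG e'] by blast
  define r where "r = F (x0 + t *\<^sub>R d) - F x0 - t *\<^sub>R G d"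
  have "inner (F (x0 + t *\<^sub>R d) - F x0) d = t * inner (G d) d + inner r d"
    by (simp add: r_def inner_diff_left)
  also have "inner r d \<le> norm r * norm d" by (rule order_trans[OF _ Cauchy_Schwarz_ineq2]) simp
  hence "inner r d \<le> e' * t * (norm d)\<^sup>2"
    using tt mult_right_mono[OF tt norm_ge_zero[of d]] by (simp add: r_def power2_eq_square mult_ac)
  finally have "m * t * (norm d)\<^sup>2 \<le> t * inner (G d) d + e' * t * (norm d)\<^sup>2"
    using low[OF t] by simp
  hence "t * (m * (norm d)\<^sup>2) \<le> t * (inner (G d) d + e' * (norm d)\<^sup>2)"
    by (simp add: algebra_simps)
  hence "m * (norm d)\<^sup>2 \<le> inner (G d) d + e' * (norm d)\<^sup>2" using t by simp
  moreover have "e' * (norm d)\<^sup>2 \<le> e"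
  proof -
    have "e' * (norm d)\<^sup>2 \<le> e' * ((norm d)\<^sup>2 + 1)" using e' by simp
    also have "\<dots> = e" using nd1 by (simp add: e'_def)
    finally show ?thesis .
  qed
  ultimately show "m * (norm d)\<^sup>2 \<le> inner (G d) d + e" by linarith
qed

lemma deriv_lipschitz:
  fixes F :: "'a::real_normed_vector \<Rightarrow> 'b::real_normed_vector"
  assumes FG: "(F has_derivative G) (at x0)"
    and lip: "\<And>y. norm (F y - F x0) \<le> L * norm (y - x0)"
  shows "norm (G d) \<le> L * norm d"
proof (rule field_le_epsilon)
  fix e :: real assume e: "e > 0"
  define e' where "e' = e / (norm d + 1)"
  have nd1: "norm d + 1 > 0" using norm_ge_zero[of d] by linarith
  hence e': "e' > 0" using e by (simp add: e'_def)
  obtain t where t: "t > 0" and tt: "norm (F (x0 + t *\<^sub>R d) - F x0 - t *\<^sub>R G d) \<le> e' * t * norm d"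
    using deriv_dir[OF FG e'] by blast
  have "t * norm (G d) = norm (t *\<^sub>R G d)" using t by simp
  also have "\<dots> \<le> norm (F (x0 + t *\<^sub>R d) - F x0) + norm (F (x0 + t *\<^sub>R d) - F x0 - t *\<^sub>R G d)"
  proof -
    have "t *\<^sub>R G d = (F (x0 + t *\<^sub>R d) - F x0) - (F (x0 + t *\<^sub>R d) - F x0 - t *\<^sub>R G d)" by simp
    thus ?thesis by (metis norm_triangle_ineq4)
  qed
  also have "\<dots> \<le> L * (t * norm d) + e' * t * norm d"
    using lip[of "x0 + t *\<^sub>R d"] tt t by simp
  finally have "t * norm (G d) \<le> t * (L * norm d + e' * norm d)" by (simp add: algebra_simps)
  hence "norm (G d) \<le> L * norm d + e' * norm d" using t by simp
  moreover have "e' * norm d \<le> e"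
  proof -
    have "e' * norm d \<le> e' * (norm d + 1)" using e' by simp
    also have "\<dots> = e" using nd1 by (simp add: e'_def)
    finally show ?thesis .
  qed
  ultimately show "norm (G d) \<le> L * norm d + e" by linarith
qed

lemma line_deriv:
  fixes f :: "'a::euclidean_space \<Rightarrow> real"
  assumes "f differentiable (at (a + s *\<^sub>R v))"
  shows "((\<lambda>s. f (a + s *\<^sub>R v)) has_real_derivative inner v (grad f (a + s *\<^sub>R v))) (at s)"
proof -
  have l: "((\<lambda>s. a + s *\<^sub>R v) has_derivative (\<lambda>s. s *\<^sub>R v)) (at s)"
    by (auto intro!: derivative_eq_intros)
  have "((\<lambda>s. f (a + s *\<^sub>R v)) has_derivative (\<lambda>x. inner (x *\<^sub>R v) (grad f (a + s *\<^sub>R v)))) (at s)"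
    by (rule has_derivative_compose[OF l grad_works[OF assms]])
  moreover have "(\<lambda>x. inner (x *\<^sub>R v) (grad f (a + s *\<^sub>R v))) = (*) (inner v (grad f (a + s *\<^sub>R v)))"
    by (auto simp: mult.commute)
  ultimately show ?thesis by (simp add: has_field_derivative_def)
qed

lemma sym_aux:
  fixes f :: "'a::euclidean_space \<Rightarrow> real"
  assumes diff: "\<And>x. f differentiable (at x)"
    and del: "\<And>y. norm (y - x0) < \<delta> \<Longrightarrow> norm (grad f y - grad f x0 - H (y - x0)) \<le> e * norm (y - x0)"
    and lin: "linear H" and t: "t > 0" and tu: "t * (norm u + norm v) < \<delta>" and e: "e \<ge> 0"
  shows "\<bar>f (x0 + t *\<^sub>R u + t *\<^sub>R v) - f (x0 + t *\<^sub>R u) - f (x0 + t *\<^sub>R v) + f x0 - t\<^sup>2 * inner (H u) v\<bar>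
          \<le> 2 * e * t\<^sup>2 * (norm u + norm v) * norm v"
proof -
  define \<phi> where "\<phi> s = f ((x0 + t *\<^sub>R u) + s *\<^sub>R v) - f (x0 + s *\<^sub>R v)" for s
  define \<phi>' where "\<phi>' s = inner v (grad f ((x0 + t *\<^sub>R u) + s *\<^sub>R v)) - inner v (grad f (x0 + s *\<^sub>R v))" for s
  have der: "(\<phi> has_real_derivative \<phi>' s) (at s)" for s
    unfolding \<phi>_def \<phi>'_def
    by (intro DERIV_diff line_deriv diff)
  obtain \<xi> where \<xi>: "0 < \<xi>" "\<xi> < t" and mv: "\<phi> t - \<phi> 0 = (t - 0) * \<phi>' \<xi>"
    using MVT2[OF t, of \<phi> \<phi>'] der by blast
  define y1 where "y1 = x0 + t *\<^sub>R u + \<xi> *\<^sub>R v"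
  define y2 where "y2 = x0 + \<xi> *\<^sub>R v"
  define C where "C = t * (norm u + norm v)"
  have n1: "norm (y1 - x0) \<le> C"
  proof -
    have "norm (y1 - x0) = norm (t *\<^sub>R u + \<xi> *\<^sub>R v)" by (simp add: y1_def)
    also have "\<dots> \<le> t * norm u + \<xi> * norm v"
      using norm_triangle_ineq[of "t *\<^sub>R u" "\<xi> *\<^sub>R v"] t \<xi> by simp
    also have "\<dots> \<le> t * norm u + t * norm v" using \<xi> by (intro add_left_mono mult_right_mono) auto
    finally show ?thesis by (simp add: C_def algebra_simps)
  qed
  have n2: "norm (y2 - x0) \<le> C"
  proof -
    have "norm (y2 - x0) = \<xi> * norm v" using \<xi> by (simp add: y2_def)
    also have "\<dots> \<le> t * norm v" using \<xi> by (intro mult_right_mono) auto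
    also have "\<dots> \<le> C" using t by (simp add: C_def algebra_simps)
    finally show ?thesis .
  qed
  have Cd: "C < \<delta>" using tu by (simp add: C_def)
  define e1 where "e1 = grad f y1 - grad f x0 - H (y1 - x0)"
  define e2 where "e2 = grad f y2 - grad f x0 - H (y2 - x0)"
  have ne1: "norm e1 \<le> e * C" unfolding e1_def
    using del[of y1] n1 Cd e by (meson le_less_trans mult_left_mono order_trans)
  have ne2: "norm e2 \<le> e * C" unfolding e2_def
    using del[of y2] n2 Cd e by (meson le_less_trans mult_left_mono order_trans)
  have "grad f y1 - grad f y2 = H (y1 - x0) - H (y2 - x0) + (e1 - e2)"
    by (simp add: e1_def e2_def)
  also have "H (y1 - x0) - H (y2 - x0) = H (y1 - y2)"
    by (simp add: linear_diff[OF lin, symmetric])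
  also have "y1 - y2 = t *\<^sub>R u" by (simp add: y1_def y2_def)
  finally have gd: "grad f y1 - grad f y2 = t *\<^sub>R H u + (e1 - e2)"
    by (simp add: linear_scale[OF lin])
  have ph: "\<phi>' \<xi> = t * inner (H u) v + inner v (e1 - e2)"
    unfolding \<phi>'_def y1_def[symmetric] y2_def[symmetric]
    by (simp add: inner_diff_right[symmetric] gd inner_add_right inner_commute)
  have Delta: "f (x0 + t *\<^sub>R u + t *\<^sub>R v) - f (x0 + t *\<^sub>R u) - f (x0 + t *\<^sub>R v) + f x0 = \<phi> t - \<phi> 0"
    by (simp add: \<phi>_def)
  have "\<bar>inner v (e1 - e2)\<bar> \<le> norm v * norm (e1 - e2)" by (rule Cauchy_Schwarz_ineq2)
  also have "\<dots> \<le> norm v * (norm e1 + norm e2)" by (intro mult_left_mono norm_triangle_ineq4) auto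
  also have "\<dots> \<le> norm v * (2 * (e * C))" using ne1 ne2 by (intro mult_left_mono) auto
  finally have b: "\<bar>inner v (e1 - e2)\<bar> \<le> norm v * (2 * (e * C))" .
  have "\<phi> t - \<phi> 0 - t\<^sup>2 * inner (H u) v = t * inner v (e1 - e2)"
    using mv ph by (simp add: power2_eq_square algebra_simps)
  hence "\<bar>\<phi> t - \<phi> 0 - t\<^sup>2 * inner (H u) v\<bar> = t * \<bar>inner v (e1 - e2)\<bar>"
    using t by (simp add: abs_mult)
  also have "\<dots> \<le> t * (norm v * (2 * (e * C)))" using b t by (intro mult_left_mono) auto
  also have "\<dots> = 2 * e * t\<^sup>2 * (norm u + norm v) * norm v"
    by (simp add: C_def power2_eq_square algebra_simps)
  finally show ?thesis using Delta by simp
qed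

lemma hessian_sym:
  fixes f :: "'a::euclidean_space \<Rightarrow> real"
  assumes diff: "\<And>x. f differentiable (at x)"
    and H: "(grad f has_derivative H) (at x0)"
  shows "inner (H u) v = inner (H v) u"
proof -
  have lin: "linear H" using H has_derivative_linear by blast
  define C where "C = 2 * ((norm u + norm v) * norm v) + 2 * ((norm v + norm u) * norm u) + 1"
  have "0 \<le> (norm u + norm v) * norm v" "0 \<le> (norm v + norm u) * norm u" by simp_all
  hence C: "C > 0" unfolding C_def by linarith
  have "\<bar>inner (H u) v - inner (H v) u\<bar> \<le> 0"
  proof (rule field_le_epsilon)
    fix \<epsilon> :: real assume \<epsilon>: "\<epsilon> > 0"
    define e where "e = \<epsilon> / C"
    have e: "e > 0" using \<epsilon> C by (simp add: e_def)
    obtain \<delta> where \<delta>: "\<delta> > 0" and del: "\<And>y. norm (y - x0) < \<delta> \<Longrightarrow> norm (grad f y - grad f x0 - H (y - x0)) \<le> e * norm (y - x0)"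
      using H e unfolding has_derivative_at_alt by blast
    define t where "t = \<delta> / (2 * (norm u + norm v + 1))"
    have nuv: "norm u + norm v + 1 > 0" using norm_ge_zero[of u] norm_ge_zero[of v] by linarith
    have t: "t > 0" using \<delta> nuv by (simp add: t_def)
    have "t * (norm u + norm v) < t * (norm u + norm v + 1)" using t by simp
    also have "\<dots> = \<delta> / 2" using nuv unfolding t_def by (simp add: field_simps)
    finally have tu: "t * (norm u + norm v) < \<delta>" using \<delta> by simp
    hence tv: "t * (norm v + norm u) < \<delta>" by (simp add: add.commute)
    have A: "\<bar>f (x0 + t *\<^sub>R u + t *\<^sub>R v) - f (x0 + t *\<^sub>R u) - f (x0 + t *\<^sub>R v) + f x0 - t\<^sup>2 * inner (H u) v\<bar>
          \<le> 2 * e * t\<^sup>2 * (norm u + norm v) * norm v"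
      by (rule sym_aux[OF diff del lin t tu]) (use e in auto)
    have B: "\<bar>f (x0 + t *\<^sub>R v + t *\<^sub>R u) - f (x0 + t *\<^sub>R v) - f (x0 + t *\<^sub>R u) + f x0 - t\<^sup>2 * inner (H v) u\<bar>
          \<le> 2 * e * t\<^sup>2 * (norm v + norm u) * norm u"
      by (rule sym_aux[OF diff del lin t tv]) (use e in auto)
    have sw: "x0 + t *\<^sub>R v + t *\<^sub>R u = x0 + t *\<^sub>R u + t *\<^sub>R v" by (simp add: algebra_simps)
    have "t\<^sup>2 * \<bar>inner (H u) v - inner (H v) u\<bar> \<le> 2 * e * t\<^sup>2 * (norm u + norm v) * norm v + 2 * e * t\<^sup>2 * (norm v + norm u) * norm u"
    proof -
      have eq: "t\<^sup>2 * \<bar>inner (H u) v - inner (H v) u\<bar> = \<bar>t\<^sup>2 * inner (H u) v - t\<^sup>2 * inner (H v) u\<bar>"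
        by (metis abs_mult abs_of_nonneg zero_le_power2 right_diff_distrib)
      have "\<bar>t\<^sup>2 * inner (H u) v - t\<^sup>2 * inner (H v) u\<bar> \<le> 2 * e * t\<^sup>2 * (norm u + norm v) * norm v + 2 * e * t\<^sup>2 * (norm v + norm u) * norm u"
        using A B unfolding sw abs_le_iff by linarith
      thus ?thesis using eq by simp
    qed
    also have "\<dots> \<le> t\<^sup>2 * (e * C)"
    proof -
      have et: "0 \<le> e * t\<^sup>2" using e by simp
      thus ?thesis by (simp add: C_def algebra_simps)
    qed
    finally have "\<bar>inner (H u) v - inner (H v) u\<bar> \<le> e * C" using t by simp
    thus "\<bar>inner (H u) v - inner (H v) u\<bar> \<le> 0 + \<epsilon>" using C by (simp add: e_def)
  qed
  thus ?thesis by simp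
qed



lemma has_derivative_blkproj: "(blkproj blk s has_derivative blkproj blk s) F"
  by (rule bounded_linear_imp_has_derivative[OF bounded_linear_blkproj])

lemma blkproj_diff: "blkproj blk s (x - y) = blkproj blk s x - blkproj blk s y"
  by (rule linear_diff[OF linear_blkproj])

lemma blkproj_add: "blkproj blk s (x + y) = blkproj blk s x + blkproj blk s y"
  by (rule linear_add[OF linear_blkproj])

lemma blkproj_scale: "blkproj blk s (c *\<^sub>R x) = c *\<^sub>R blkproj blk s x"
  by (rule linear_scale[OF linear_blkproj])

lemma blkproj_zero[simp]: "blkproj blk s 0 = 0"
  by (rule linear_0[OF linear_blkproj])

lemma grad_blk:
  fixes \<phi> :: "real^'n \<Rightarrow> real"
  assumes inv: "\<And>x. \<phi> x = \<phi> (blkproj blk s x)" and diff: "\<And>x. \<phi> differentiable (at x)"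
  shows "grad \<phi> x = blkproj blk s (grad \<phi> (blkproj blk s x))"
proof (rule grad_eqI)
  have "((\<phi> \<circ> blkproj blk s) has_derivative ((\<lambda>h. inner h (grad \<phi> (blkproj blk s x))) \<circ> blkproj blk s)) (at x)"
    by (rule diff_chain_at[OF has_derivative_blkproj grad_works[OF diff]])
  moreover have "\<phi> \<circ> blkproj blk s = \<phi>" using inv by (auto simp: o_def)
  moreover have "(\<lambda>h. inner h (grad \<phi> (blkproj blk s x))) \<circ> blkproj blk s
      = (\<lambda>h. inner h (blkproj blk s (grad \<phi> (blkproj blk s x))))"
    by (auto simp: o_def inner_blkproj)
  ultimately show "(\<phi> has_derivative (\<lambda>h. inner h (blkproj blk s (grad \<phi> (blkproj blk s x))))) (at x)"
    by simp
qed

lemma sc_mono: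
  assumes sc: "strongly_convex_grad_on S m g" and x: "x \<in> S" and y: "y \<in> S"
  shows "m * (norm (x - y))\<^sup>2 \<le> inner (grad g x - grad g y) (x - y)"
proof -
  have 1: "g y \<ge> g x + inner (grad g x) (y - x) + m / 2 * (norm (y - x))\<^sup>2"
    using sc x y unfolding strongly_convex_grad_on_def by blast
  have 2: "g x \<ge> g y + inner (grad g y) (x - y) + m / 2 * (norm (x - y))\<^sup>2"
    using sc x y unfolding strongly_convex_grad_on_def by blast
  have "norm (y - x) = norm (x - y)" by (rule norm_minus_commute)
  moreover have "inner (grad g x) (y - x) = - inner (grad g x) (x - y)"
    by (simp add: inner_diff_right)
  ultimately show ?thesis using 1 2 by (simp add: inner_diff_left)
qed

lemma block_step:
  fixes f :: "real^'n \<Rightarrow> real" and \<phi> :: "nat \<Rightarrow> real^'n \<Rightarrow> real"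
  assumes f_diff: "\<And>x. f differentiable (at x)"
    and gf_diff: "\<And>x. grad f differentiable (at x)"
    and Hf: "(grad f has_derivative Hf) (at xs)"
    and gf0: "grad f xs = 0"
    and inv: "\<And>x. \<phi> s x = \<phi> s (blkproj blk s x)"
    and p_diff: "\<And>x. \<phi> s differentiable (at x)"
    and gp_diff: "\<And>x. grad (\<phi> s) differentiable (at x)"
    and sc: "strongly_convex_grad_on (blksub blk s) ms (\<phi> s)"
    and ms: "ms > 0" and a: "\<alpha> > 0"
  shows "psi_blk f \<phi> blk \<alpha> s xs = xs \<and> (\<exists>D. (psi_blk f \<phi> blk \<alpha> s has_derivative D) (at xs) \<and>
     (\<exists>B\<ge>0. \<forall>h. \<exists>d\<in>blksub blk s. D h = h - d \<and> ms * (norm d)\<^sup>2 \<le> \<alpha> * inner d (Hf h)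
        \<and> norm (blkproj blk s (Hf h)) \<le> B * norm d))"
proof -
  let ?P = "blkproj blk s" and ?S = "blksub blk s"
  define g where "g = grad (\<phi> s)"
  have gP: "g x = ?P (g (?P x))" for x unfolding g_def by (rule grad_blk[OF inv p_diff])
  have g_sub: "g x \<in> ?S" for x using gP[of x] by (metis blkproj_in_blksub)
  have g_eq: "g x = g (?P x)" for x
  proof -
    have "g (?P x) = ?P (g (?P x))" using gP[of "?P x"] by (simp only: blkproj_idem)
    thus ?thesis using gP[of x] by metis
  qed
  have Pg: "?P (g x) = g x" for x using g_sub blksub_proj by blast
  have mono: "ms * (norm (x - y))\<^sup>2 \<le> inner (g x - g y) (x - y)" if "x \<in> ?S" "y \<in> ?S" for x y
    unfolding g_def by (rule sc_mono[OF sc that])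
  have inj: "inj_on g ?S"
  proof (rule inj_onI)
    fix x y assume xy: "x \<in> ?S" "y \<in> ?S" "g x = g y"
    have "ms * (norm (x - y))\<^sup>2 \<le> 0" using mono[OF xy(1,2)] xy(3) by simp
    thus "x = y" using ms by (simp add: mult_le_0_iff)
  qed
  define x0 where "x0 = ?P xs"
  have x0S: "x0 \<in> ?S" by (simp add: x0_def blkproj_in_blksub)
  have Px0: "?P x0 = x0" by (simp add: x0_def)
  have gder: "(g has_derivative frechet_derivative g (at x)) (at x)" for x
    using gp_diff unfolding g_def by (simp add: frechet_derivative_works[symmetric])
  define G where "G = frechet_derivative g (at x0)"
  have gG: "(g has_derivative G) (at x0)" using gder by (simp add: G_def)
  have linG: "linear G" using gG has_derivative_linear by blast
  have G_P: "G h = G (?P h)" for h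
  proof -
    have "((g \<circ> ?P) has_derivative (G \<circ> ?P)) (at x0)"
      by (rule diff_chain_at[OF has_derivative_blkproj]) (simp add: Px0 gG)
    moreover have "g \<circ> ?P = g" using g_eq by (auto simp: o_def)
    ultimately have "(g has_derivative (G \<circ> ?P)) (at x0)" by simp
    hence "G = G \<circ> ?P" using gG has_derivative_unique by blast
    thus ?thesis by (metis comp_apply)
  qed
  have PG: "?P (G h) = G h" for h
  proof -
    have "((?P \<circ> g) has_derivative (?P \<circ> G)) (at x0)"
      by (rule diff_chain_at[OF gG has_derivative_blkproj])
    moreover have "?P \<circ> g = g" using Pg by (auto simp: o_def)
    ultimately have "(g has_derivative (?P \<circ> G)) (at x0)" by simp
    hence "G = ?P \<circ> G" using gG has_derivative_unique by blast
    thus ?thesis by (metis comp_apply)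
  qed
  have G_low: "ms * (norm d)\<^sup>2 \<le> inner (G d) d" if dS: "d \<in> ?S" for d
  proof (rule deriv_lower[OF gG])
    fix t :: real assume t: "t > 0"
    have "x0 + t *\<^sub>R d \<in> ?S"
      using x0S dS subspace_blksub by (metis subspace_add subspace_mul)
    from mono[OF this x0S]
    have "ms * (norm (t *\<^sub>R d))\<^sup>2 \<le> inner (g (x0 + t *\<^sub>R d) - g x0) (t *\<^sub>R d)" by simp
    hence "t * (ms * t * (norm d)\<^sup>2) \<le> t * inner (g (x0 + t *\<^sub>R d) - g x0) d"
      using t by (simp add: power2_eq_square algebra_simps)
    thus "ms * t * (norm d)\<^sup>2 \<le> inner (g (x0 + t *\<^sub>R d) - g x0) d" using t by simp
  qed
  obtain BG where BG: "BG \<ge> 0" "\<And>h. norm (G h) \<le> norm h * BG"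
    using gG has_derivative_bounded_linear bounded_linear.nonneg_bounded by blast
  define \<Phi> where "\<Phi> x = g x + (x - ?P x)" for x
  define \<Phi>' where "\<Phi>' h = G h + (h - ?P h)" for h
  have \<Phi>der: "(\<Phi> has_derivative \<Phi>') (at x0)"
    unfolding \<Phi>_def[abs_def] \<Phi>'_def[abs_def]
    by (intro has_derivative_add gG has_derivative_diff has_derivative_ident has_derivative_blkproj)
  have \<Phi>cont: "continuous_on UNIV \<Phi>"
  proof -
    have "isCont \<Phi> x" for x
    proof -
      have "(\<Phi> has_derivative (\<lambda>h. frechet_derivative g (at x) h + (h - ?P h))) (at x)"
        unfolding \<Phi>_def[abs_def]
        by (intro has_derivative_add gder has_derivative_diff has_derivative_ident has_derivative_blkproj)
      thus ?thesis using has_derivative_continuous by blast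
    qed
    thus ?thesis by (simp add: continuous_at_imp_continuous_on)
  qed
  have \<Phi>inj: "inj \<Phi>"
  proof (rule injI)
    fix x y assume e: "\<Phi> x = \<Phi> y"
    have "?P (\<Phi> x) = g x" by (simp add: \<Phi>_def blkproj_add blkproj_diff Pg)
    moreover have "?P (\<Phi> y) = g y" by (simp add: \<Phi>_def blkproj_add blkproj_diff Pg)
    ultimately have gxy: "g x = g y" using e by simp
    hence r: "x - ?P x = y - ?P y" using e by (simp add: \<Phi>_def)
    have "g (?P x) = g (?P y)" using gxy g_eq by metis
    hence "?P x = ?P y" using inj blkproj_in_blksub by (metis inj_onD)
    thus "x = y" using r by (metis diff_add_cancel)
  qed
  have lin\<Phi>': "linear \<Phi>'"
    unfolding \<Phi>'_def[abs_def] using linG linear_blkproj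
    by (intro linear_compose_add linear_compose_sub linear_ident) auto
  have \<Phi>'inj: "inj \<Phi>'"
  proof -
    have "h = 0" if "\<Phi>' h = 0" for h
    proof -
      have "?P (\<Phi>' h) = G h" by (simp add: \<Phi>'_def blkproj_add blkproj_diff PG)
      hence Gh: "G h = 0" using that by simp
      hence "h - ?P h = 0" using that by (simp add: \<Phi>'_def)
      hence hS: "h \<in> ?S" by (metis blkproj_in_blksub eq_iff_diff_eq_0)
      have "ms * (norm h)\<^sup>2 \<le> 0" using G_low[OF hS] Gh by simp
      thus "h = 0" using ms by (simp add: mult_le_0_iff)
    qed
    thus ?thesis using lin\<Phi>' by (simp add: linear_injective_0)
  qed
  obtain g' where g'lin: "linear g'" and g'1: "\<And>x. g' (\<Phi>' x) = x" and g'2: "\<And>x. \<Phi>' (g' x) = x"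
    using linear_injective_isomorphism[OF lin\<Phi>' \<Phi>'inj] by auto
  define ginv where "ginv = inv_into UNIV \<Phi>"
  have ginv: "ginv (\<Phi> x) = x" for x using \<Phi>inj by (simp add: ginv_def)
  have id: "\<Phi>' \<circ> g' = id" using g'2 by auto
  have ginv_der: "(ginv has_derivative g') (at (\<Phi> x0))"
    by (rule has_derivative_inverse_strong[OF open_UNIV UNIV_I \<Phi>cont _ \<Phi>der id]) (simp add: ginv)
  have bl_g': "bounded_linear g'" using g'lin linear_conv_bounded_linear by blast
  have intr: "\<Phi> x0 \<in> interior (range \<Phi>)"
    by (rule sussmann_open_mapping[OF open_UNIV \<Phi>cont UNIV_I \<Phi>der bl_g' id subset_refl]) simp
  define R where "R = inv_into ?S g"
  have RG: "R y = ginv y" if yr: "y \<in> range \<Phi>" and yS: "y \<in> ?S" for y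
  proof -
    obtain x where x: "y = \<Phi> x" using yr by blast
    have "?P y = y" using yS blksub_proj by blast
    hence gy: "g x = y" using x by (simp add: \<Phi>_def blkproj_add blkproj_diff Pg)
    hence "x - ?P x = 0" using x by (simp add: \<Phi>_def)
    hence xS: "x \<in> ?S" by (metis blkproj_in_blksub eq_iff_diff_eq_0)
    have "R y = x" using gy inj xS by (auto simp: R_def inv_into_f_f)
    thus ?thesis using x ginv by simp
  qed
  define v where "v x = g (?P x) - \<alpha> *\<^sub>R ?P (grad f x)" for x
  define v' where "v' h = G (?P h) - \<alpha> *\<^sub>R ?P (Hf h)" for h
  have vder: "(v has_derivative v') (at xs)"
  proof -
    have "((g \<circ> ?P) has_derivative (G \<circ> ?P)) (at xs)"
      by (rule diff_chain_at[OF has_derivative_blkproj]) (simp add: gG x0_def[symmetric])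
    hence "((\<lambda>x. g (?P x)) has_derivative (\<lambda>h. G (?P h))) (at xs)" by (simp add: o_def)
    moreover have "((\<lambda>x. ?P (grad f x)) has_derivative (\<lambda>h. ?P (Hf h))) (at xs)"
      using diff_chain_at[OF Hf has_derivative_blkproj] by (simp add: o_def)
    ultimately show ?thesis unfolding v_def[abs_def] v'_def[abs_def]
      by (intro has_derivative_diff has_derivative_scaleR_right)
  qed
  have vxs: "v xs = \<Phi> x0" by (simp add: v_def gf0 \<Phi>_def Px0 x0_def[symmetric])
  have vS: "v x \<in> ?S" for x
    unfolding v_def using g_sub subspace_blksub blkproj_in_blksub
    by (metis subspace_diff subspace_mul)
  have psi_eq: "psi_blk f \<phi> blk \<alpha> s x = x - ?P x + R (v x)" for x
    by (simp add: psi_blk_def R_def v_def g_def)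
  define \<psi>2 where "\<psi>2 x = x - ?P x + ginv (v x)" for x
  have ev: "\<forall>\<^sub>F x in at xs. \<psi>2 x = psi_blk f \<phi> blk \<alpha> s x"
  proof -
    have "isCont v xs" using vder has_derivative_continuous by blast
    hence "\<forall>\<^sub>F x in at xs. v x \<in> interior (range \<Phi>)"
      using intr vxs by (metis continuous_at open_interior topological_tendstoD tendsto_mono at_le UNIV_I)
    thus ?thesis
    proof (rule eventually_mono)
      fix x assume "v x \<in> interior (range \<Phi>)"
      hence "v x \<in> range \<Phi>" using interior_subset by blast
      thus "\<psi>2 x = psi_blk f \<phi> blk \<alpha> s x" using RG vS psi_eq \<psi>2_def by simp
    qed
  qed
  define D where "D h = h - ?P h + g' (v' h)" for h
  have \<psi>2der: "(\<psi>2 has_derivative D) (at xs)"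
  proof -
    have "((ginv \<circ> v) has_derivative (g' \<circ> v')) (at xs)"
      by (rule diff_chain_at[OF vder]) (simp add: vxs ginv_der)
    hence "((\<lambda>x. ginv (v x)) has_derivative (\<lambda>h. g' (v' h))) (at xs)" by (simp add: o_def)
    thus ?thesis unfolding \<psi>2_def[abs_def] D_def[abs_def]
      by (intro has_derivative_add has_derivative_diff has_derivative_ident has_derivative_blkproj)
  qed
  have Rx0: "R (g x0) = x0" using inj x0S by (simp add: R_def inv_into_f_f)
  have fix1: "psi_blk f \<phi> blk \<alpha> s xs = xs"
    using Rx0 by (simp add: psi_eq v_def gf0 x0_def[symmetric])
  have fix2: "\<psi>2 xs = psi_blk f \<phi> blk \<alpha> s xs"
    using RG[of "v xs"] vxs vS[of xs] by (simp add: \<psi>2_def psi_eq)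
  have Dder: "(psi_blk f \<phi> blk \<alpha> s has_derivative D) (at xs)"
    by (rule has_derivative_transform_eventually[OF \<psi>2der ev fix2 UNIV_I])
  have step: "\<exists>d\<in>?S. D h = h - d \<and> ms * (norm d)\<^sup>2 \<le> \<alpha> * inner d (Hf h)
        \<and> norm (?P (Hf h)) \<le> (BG / \<alpha>) * norm d" for h
  proof -
    define z where "z = ?P (Hf h)"
    define w where "w = g' z"
    have "\<Phi>' w = z" by (simp add: w_def g'2)
    hence "?P (\<Phi>' w) = ?P z" by simp
    hence Gw: "G w = z" by (simp add: \<Phi>'_def blkproj_add blkproj_diff PG z_def)
    hence "w - ?P w = 0" using \<open>\<Phi>' w = z\<close> by (simp add: \<Phi>'_def)
    hence wS: "w \<in> ?S" by (metis blkproj_in_blksub eq_iff_diff_eq_0)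
    define d where "d = \<alpha> *\<^sub>R w"
    have dS: "d \<in> ?S" unfolding d_def by (rule subspace_mul[OF subspace_blksub wS])
    have PhS: "?P h \<in> ?S" by (rule blkproj_in_blksub)
    have "\<Phi>' (?P h) = G (?P h)" by (simp add: \<Phi>'_def)
    hence g'G: "g' (G (?P h)) = ?P h" using g'1 by metis
    have "D h = h - ?P h + (g' (G (?P h)) - \<alpha> *\<^sub>R g' z)"
      by (simp add: D_def v'_def linear_diff[OF g'lin] linear_scale[OF g'lin] z_def)
    also have "\<dots> = h - d" by (simp add: g'G d_def w_def)
    finally have Dh: "D h = h - d" .
    have "inner d (Hf h) = inner d z" by (simp add: z_def inner_blksub_proj[OF dS])
    also have "\<dots> = \<alpha> * inner w (G w)" by (simp add: d_def Gw)
    finally have i1: "\<alpha> * inner d (Hf h) = \<alpha>\<^sup>2 * inner (G w) w"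
      by (simp add: power2_eq_square inner_commute)
    have "ms * (norm d)\<^sup>2 = \<alpha>\<^sup>2 * (ms * (norm w)\<^sup>2)"
      using a by (simp add: d_def power2_eq_square)
    also have "\<dots> \<le> \<alpha>\<^sup>2 * inner (G w) w" by (intro mult_left_mono G_low wS) auto
    finally have i2: "ms * (norm d)\<^sup>2 \<le> \<alpha> * inner d (Hf h)" using i1 by simp
    have "norm (?P (Hf h)) = norm (G w)" by (simp add: Gw z_def)
    also have "\<dots> \<le> norm w * BG" by (rule BG(2))
    also have "\<dots> = (BG / \<alpha>) * norm d" using a by (simp add: d_def)
    finally show ?thesis using Dh i2 dS by blast
  qed
  have "BG / \<alpha> \<ge> 0" using BG a by simp
  thus ?thesis using fix1 Dder step by blast
qed


lemma LA_main:
  fixes H :: "real^'n \<Rightarrow> real^'n" and D :: "nat \<Rightarrow> real^'n \<Rightarrow> real^'n"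
  assumes lin: "linear H" and sym: "\<And>x y. inner x (H y) = inner (H x) y"
    and bnd: "\<And>x. norm (H x) \<le> L * norm x" and L: "L > 0"
    and a: "\<alpha> > 0" and mu: "\<mu> > 0" and aL: "\<alpha> * L \<le> \<mu>" and K: "K \<ge> 0"
    and blk_range: "\<And>i. blk i \<in> {1..p}"
    and step: "\<And>s h. s \<in> {1..p} \<Longrightarrow> \<exists>d. D s h = h - d \<and> \<mu> * (norm d)\<^sup>2 \<le> \<alpha> * inner d (H h)
                   \<and> norm (blkproj blk s (H h)) \<le> K * norm d"
    and linC: "linear (dcomp D p)"
    and ev: "H v = l *\<^sub>R v" and v0: "v \<noteq> 0" and l: "l < 0"
  shows "\<exists>lam. complex_eigenvalue (matrix (dcomp D p)) lam \<and> cmod lam > 1"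
proof -
  define C where "C = dcomp D p"
  obtain \<delta> where \<delta>: "\<delta> > 0" and sw: "\<And>h. inner h (H h) \<le> 0 \<Longrightarrow>
            (1 + \<delta>) * (- inner h (H h)) \<le> - inner (C h) (H (C h))"
    using sweep[OF lin sym bnd a mu aL K blk_range step] unfolding C_def by blast
  define a0 where "a0 = - inner v (H v)"
  have a0: "a0 > 0"
  proof -
    have "inner v (H v) = l * inner v v" using ev by simp
    moreover have "inner v v > 0" using v0 by simp
    ultimately show ?thesis using l by (simp add: a0_def mult_neg_pos)
  qed
  have grow: "(1 + \<delta>) ^ k * a0 \<le> - inner ((C ^^ k) v) (H ((C ^^ k) v))" for k
  proof (induction k)
    case 0 thus ?case by (simp add: a0_def)
  next
    case (Suc k)
    have pos: "0 \<le> (1 + \<delta>) ^ k * a0" using \<delta> a0 by simp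
    hence "inner ((C ^^ k) v) (H ((C ^^ k) v)) \<le> 0" using Suc by linarith
    from sw[OF this] have "(1 + \<delta>) * (- inner ((C ^^ k) v) (H ((C ^^ k) v)))
        \<le> - inner ((C ^^ Suc k) v) (H ((C ^^ Suc k) v))" by simp
    moreover have "(1 + \<delta>) * ((1 + \<delta>) ^ k * a0) \<le> (1 + \<delta>) * (- inner ((C ^^ k) v) (H ((C ^^ k) v)))"
      by (rule mult_left_mono[OF Suc.IH]) (use \<delta> in simp)
    hence "(1 + \<delta>) ^ Suc k * a0 \<le> (1 + \<delta>) * (- inner ((C ^^ k) v) (H ((C ^^ k) v)))"
      by (simp add: mult.assoc)
    ultimately show ?case by linarith
  qed
  have qb: "- inner x (H x) \<le> L * (norm x)\<^sup>2" for x
  proof -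
    have "- inner x (H x) \<le> norm x * norm (H x)" using Cauchy_Schwarz_ineq2[of x "H x"] by linarith
    also have "\<dots> \<le> norm x * (L * norm x)" by (intro mult_left_mono bnd) auto
    finally show ?thesis by (simp add: power2_eq_square mult_ac)
  qed
  define r where "r = sqrt (1 + \<delta>)"
  define c where "c = sqrt (a0 / L)"
  have r: "r > 1" using \<delta> by (simp add: r_def)
  have c: "c > 0" using a0 L by (simp add: c_def)
  have A: "(*v) (matrix C) = C"
    using matrix_works[OF linear_matrix_vector_mul_eq[THEN iffD2, OF linC[folded C_def]]] by auto
  have gr: "c * r ^ k \<le> norm (((*v) (matrix C) ^^ k) v)" for k
  proof -
    have "(1 + \<delta>) ^ k * a0 \<le> L * (norm ((C ^^ k) v))\<^sup>2" using grow[of k] qb[of "(C ^^ k) v"] by linarith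
    hence "(1 + \<delta>) ^ k * (a0 / L) \<le> (norm ((C ^^ k) v))\<^sup>2" using L by (simp add: field_simps)
    hence s1: "sqrt ((1 + \<delta>) ^ k * (a0 / L)) \<le> sqrt ((norm ((C ^^ k) v))\<^sup>2)" by (rule real_sqrt_le_mono)
    have s2: "r ^ k * c = sqrt ((1 + \<delta>) ^ k * (a0 / L))"
      unfolding r_def c_def by (simp only: real_sqrt_mult real_sqrt_power)
    have s3: "sqrt ((norm ((C ^^ k) v))\<^sup>2) = norm ((C ^^ k) v)" by simp
    have "r ^ k * c \<le> norm ((C ^^ k) v)" using s1 s2 s3 by simp
    thus ?thesis using A by (simp add: mult.commute)
  qed
  show ?thesis using exp_growth_eigenvalue[OF r c gr] unfolding C_def .
qed

lemma psi_comp_deriv: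
  assumes "\<And>s. s \<in> {1..p} \<Longrightarrow> (psi_blk f \<phi> blk \<alpha> s has_derivative D s) (at xs) \<and> psi_blk f \<phi> blk \<alpha> s xs = xs"
  shows "k \<le> p \<Longrightarrow> (psi_comp f \<phi> blk \<alpha> k has_derivative dcomp D k) (at xs) \<and> psi_comp f \<phi> blk \<alpha> k xs = xs"
proof (induction k)
  case 0
  show ?case using has_derivative_ident by (simp add: id_def)
next
  case (Suc k)
  hence IH: "(psi_comp f \<phi> blk \<alpha> k has_derivative dcomp D k) (at xs)" "psi_comp f \<phi> blk \<alpha> k xs = xs" by auto
  have s: "Suc k \<in> {1..p}" using Suc.prems by auto
  have "((psi_blk f \<phi> blk \<alpha> (Suc k) \<circ> psi_comp f \<phi> blk \<alpha> k) has_derivative (D (Suc k) \<circ> dcomp D k)) (at xs)"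
    by (rule diff_chain_at[OF IH(1)]) (use assms[OF s] IH(2) in simp)
  thus ?case using assms[OF s] IH(2) by (simp add: o_def)
qed

theorem proposition6:
  fixes f :: "real^'n \<Rightarrow> real" and L :: real
    and p :: nat and blk :: "'n \<Rightarrow> nat"
    and \<phi> :: "nat \<Rightarrow> real^'n \<Rightarrow> real" and \<mu> :: "nat \<Rightarrow> real"
    and \<alpha> :: real and xs :: "real^'n"
  assumes blk_range: "\<And>i. blk i \<in> {1..p}"
    and blk_nonempty: "\<And>s. s \<in> {1..p} \<Longrightarrow> \<exists>i. blk i = s"
    and f_C2: "C2 f"
    and L_pos: "L > 0"
    and f_lip: "\<And>x y. norm (grad f x - grad f y) \<le> L * norm (x - y)"
    and \<phi>_block: "\<And>s x. s \<in> {1..p} \<Longrightarrow> \<phi> s x = \<phi> s (blkproj blk s x)"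
    and \<phi>_C2: "\<And>s. s \<in> {1..p} \<Longrightarrow> C2 (\<phi> s)"
    and \<mu>_pos: "\<And>s. s \<in> {1..p} \<Longrightarrow> \<mu> s > 0"
    and \<phi>_sc: "\<And>s. s \<in> {1..p} \<Longrightarrow> strongly_convex_grad_on (blksub blk s) (\<mu> s) (\<phi> s)"
    and \<alpha>_pos: "\<alpha> > 0"
    and \<alpha>_bound: "\<alpha> < Min (\<mu> ` {1..p}) / L"
    and saddle: "strict_saddle f xs"
  shows "psi_comp f \<phi> blk \<alpha> p differentiable (at xs) \<and>
         (\<exists>l. complex_eigenvalue (matrix (frechet_derivative (psi_comp f \<phi> blk \<alpha> p) (at xs))) l
              \<and> cmod l > 1)"
proof -
  have fd: "\<And>x. f differentiable (at x)" and gfd: "\<And>x. grad f differentiable (at x)"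
    using f_C2 by (auto simp: C2_def)
  define Hf where "Hf = frechet_derivative (grad f) (at xs)"
  have Hf: "(grad f has_derivative Hf) (at xs)"
    using gfd[of xs] by (simp add: Hf_def frechet_derivative_works[symmetric])
  have linHf: "linear Hf" using Hf has_derivative_linear by blast
  have symHf: "inner x (Hf y) = inner (Hf x) y" for x y
    using hessian_sym[OF fd Hf, of y x] by (simp add: inner_commute)
  have bndHf: "norm (Hf x) \<le> L * norm x" for x
    by (rule deriv_lipschitz[OF Hf f_lip])
  have gf0: "grad f xs = 0" and "\<exists>l. real_eigenvalue (hessian f xs) l \<and> l < 0"
    using saddle by (auto simp: strict_saddle_def)
  then obtain l v where l: "l < 0" and v0: "v \<noteq> 0" and hv: "hessian f xs *v v = l *\<^sub>R v"
    unfolding real_eigenvalue_def by blast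
  have ev: "Hf v = l *\<^sub>R v"
    using hv matrix_works[OF linear_matrix_vector_mul_eq[THEN iffD2, OF linHf]]
    by (simp add: hessian_def Hf_def[symmetric])
  have p1: "p \<ge> 1" using blk_range[of undefined] by auto
  define \<mu>m where "\<mu>m = Min (\<mu> ` {1..p})"
  have fin: "finite (\<mu> ` {1..p})" and ne: "\<mu> ` {1..p} \<noteq> {}" using p1 by auto
  have \<mu>m_in: "\<mu>m \<in> \<mu> ` {1..p}" using Min_in[OF fin ne] by (simp add: \<mu>m_def)
  have \<mu>m: "\<mu>m > 0" using \<mu>m_in \<mu>_pos by auto
  have \<mu>m_le: "\<mu>m \<le> \<mu> s" if "s \<in> {1..p}" for s using Min_le[OF fin] that by (simp add: \<mu>m_def)
  have "\<alpha> < \<mu>m / L" using \<alpha>_bound by (simp add: \<mu>m_def)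
  hence "\<alpha> * L < \<mu>m" using L_pos by (simp add: field_simps)
  hence aL: "\<alpha> * L \<le> \<mu>m" by simp
  define D where "D s = frechet_derivative (psi_blk f \<phi> blk \<alpha> s) (at xs)" for s
  have blkres: "psi_blk f \<phi> blk \<alpha> s xs = xs \<and> (psi_blk f \<phi> blk \<alpha> s has_derivative D s) (at xs) \<and>
     (\<exists>B\<ge>0. \<forall>h. \<exists>d\<in>blksub blk s. D s h = h - d \<and> \<mu> s * (norm d)\<^sup>2 \<le> \<alpha> * inner d (Hf h)
        \<and> norm (blkproj blk s (Hf h)) \<le> B * norm d)" if s: "s \<in> {1..p}" for s
  proof -
    have pd: "\<And>x. \<phi> s differentiable (at x)" and gpd: "\<And>x. grad (\<phi> s) differentiable (at x)"
      using \<phi>_C2[OF s] by (auto simp: C2_def)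
    from block_step[where f=f and Hf=Hf and xs=xs and \<phi>=\<phi> and s=s and blk=blk and ms="\<mu> s" and \<alpha>=\<alpha>, OF fd gfd Hf gf0 \<phi>_block[OF s] pd gpd \<phi>_sc[OF s] \<mu>_pos[OF s] \<alpha>_pos]
    obtain D' where fx: "psi_blk f \<phi> blk \<alpha> s xs = xs" and D': "(psi_blk f \<phi> blk \<alpha> s has_derivative D') (at xs)"
      and B: "\<exists>B\<ge>0. \<forall>h. \<exists>d\<in>blksub blk s. D' h = h - d \<and> \<mu> s * (norm d)\<^sup>2 \<le> \<alpha> * inner d (Hf h)
        \<and> norm (blkproj blk s (Hf h)) \<le> B * norm d" by blast
    have "D' = D s" using frechet_derivative_at[OF D'] by (simp add: D_def)
    thus ?thesis using fx D' B by blast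
  qed
  have "\<forall>s\<in>{1..p}. \<exists>B. B \<ge> 0 \<and> (\<forall>h. \<exists>d\<in>blksub blk s. D s h = h - d \<and> \<mu> s * (norm d)\<^sup>2 \<le> \<alpha> * inner d (Hf h)
        \<and> norm (blkproj blk s (Hf h)) \<le> B * norm d)" using blkres by blast
  then obtain B where B: "\<And>s. s \<in> {1..p} \<Longrightarrow> B s \<ge> 0 \<and> (\<forall>h. \<exists>d\<in>blksub blk s. D s h = h - d \<and> \<mu> s * (norm d)\<^sup>2 \<le> \<alpha> * inner d (Hf h)
        \<and> norm (blkproj blk s (Hf h)) \<le> B s * norm d)" by metis
  define K where "K = (\<Sum>s\<in>{1..p}. B s)"
  have BK: "B s \<le> K" if "s \<in> {1..p}" for s
    unfolding K_def by (rule member_le_sum[OF that]) (use B in auto)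
  have K: "K \<ge> 0" unfolding K_def by (rule sum_nonneg) (use B in auto)
  have step: "\<exists>d. D s h = h - d \<and> \<mu>m * (norm d)\<^sup>2 \<le> \<alpha> * inner d (Hf h)
                   \<and> norm (blkproj blk s (Hf h)) \<le> K * norm d" if s: "s \<in> {1..p}" for s h
  proof -
    obtain d where d: "D s h = h - d" "\<mu> s * (norm d)\<^sup>2 \<le> \<alpha> * inner d (Hf h)"
        "norm (blkproj blk s (Hf h)) \<le> B s * norm d" using B[OF s] by blast
    have "\<mu>m * (norm d)\<^sup>2 \<le> \<mu> s * (norm d)\<^sup>2" using \<mu>m_le[OF s] by (intro mult_right_mono) auto
    moreover have "B s * norm d \<le> K * norm d" using BK[OF s] by (intro mult_right_mono) auto
    ultimately show ?thesis using d by (meson order_trans)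
  qed
  have pc: "(psi_comp f \<phi> blk \<alpha> p has_derivative dcomp D p) (at xs)"
    using psi_comp_deriv[of p f \<phi> blk \<alpha> D xs p] blkres by blast
  have linC: "linear (dcomp D p)" using pc has_derivative_linear by blast
  have fd_eq: "frechet_derivative (psi_comp f \<phi> blk \<alpha> p) (at xs) = dcomp D p"
    using frechet_derivative_at[OF pc] by simp
  have "psi_comp f \<phi> blk \<alpha> p differentiable (at xs)" using pc differentiable_def by blast
  moreover have "\<exists>l. complex_eigenvalue (matrix (dcomp D p)) l \<and> cmod l > 1"
    by (rule LA_main[OF linHf symHf bndHf L_pos \<alpha>_pos \<mu>m aL K blk_range step linC ev v0 l])
  ultimately show ?thesis using fd_eq by simp
qed

end
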